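(* There exists a universal constant $A_3>0$ such that for every $n\ge1$ and any two convex bodies $A,B\subset\mathbb{R}^n$, \[ \mathrm{Vol}(A+B)^{1/n}\le A_3\,\mathrm{Vol}(A-B)^{1/n}. \]
   Context: A convex body is a bounded convex set with non-empty interior. $A+B=\{a+b:a\in A,b\in B\}$ and $A-B=\{a-b:a\in A,b\in B\}$ denote Minkowski sum and difference. *)

theory Defs
  imports "HOL-Analysis.Analysis"
begin

text \<open>R^n is modelled as the extensional functions on the index set {..<n}
  (the carrier of the product measure PiM).\<close>

definition Rn :: "nat \<Rightarrow> (nat \<Rightarrow> real) set" where
  "Rn n = PiE {..<n} (\<lambda>_. UNIV)"

definition lebesgue_n :: "nat \<Rightarrow> (nat \<Rightarrow> real) measure" where
  "lebesgue_n n = completion (PiM {..<n} (\<lambda>_. lborel))"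

definition vol_n :: "nat \<Rightarrow> (nat \<Rightarrow> real) set \<Rightarrow> real" where
  "vol_n n K = measure (lebesgue_n n) K"

definition mink_sum :: "nat \<Rightarrow> (nat \<Rightarrow> real) set \<Rightarrow> (nat \<Rightarrow> real) set \<Rightarrow> (nat \<Rightarrow> real) set" where
  "mink_sum n A B = {restrict (\<lambda>i. a i + b i) {..<n} | a b. a \<in> A \<and> b \<in> B}"

definition mink_diff :: "nat \<Rightarrow> (nat \<Rightarrow> real) set \<Rightarrow> (nat \<Rightarrow> real) set \<Rightarrow> (nat \<Rightarrow> real) set" where
  "mink_diff n A B = {restrict (\<lambda>i. a i - b i) {..<n} | a b. a \<in> A \<and> b \<in> B}"

definition convex_body_n :: "nat \<Rightarrow> (nat \<Rightarrow> real) set \<Rightarrow> bool" where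
  "convex_body_n n K \<longleftrightarrow>
     K \<subseteq> Rn n
   \<and> (\<forall>x\<in>K. \<forall>y\<in>K. \<forall>t::real. 0 \<le> t \<and> t \<le> 1 \<longrightarrow>
         restrict (\<lambda>i. (1 - t) * x i + t * y i) {..<n} \<in> K)
   \<and> (\<exists>R. \<forall>x\<in>K. \<forall>i<n. \<bar>x i\<bar> \<le> R)
   \<and> (\<exists>x\<in>K. \<exists>e>0. \<forall>y\<in>Rn n. (\<forall>i<n. \<bar>y i - x i\<bar> < e) \<longrightarrow> y \<in> K)"

end

theory Submission
  imports Defs
begin

abbreviation MM :: "nat \<Rightarrow> (nat \<Rightarrow> real) measure" where
  "MM n \<equiv> PiM {..<n} (\<lambda>_. lborel)"

definition aff :: "nat \<Rightarrow> real \<Rightarrow> (nat \<Rightarrow> real) \<Rightarrow> (nat \<Rightarrow> real) \<Rightarrow> (nat \<Rightarrow> real)" where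
  "aff n c z x = restrict (\<lambda>i. c * x i + z i) {..<n}"

interpretation PSF: product_sigma_finite "\<lambda>_::nat. lborel::real measure"
  by standard

lemma lborel_aff1:
  fixes c z :: real assumes c: "c > 0" and A: "A \<in> sets borel"
  shows "emeasure lborel ((\<lambda>x. c * x + z) -` A) = ennreal (1/c) * emeasure lborel A"
proof -
  have "emeasure lborel A = emeasure (density (distr lborel borel (\<lambda>x. z + c * x)) (\<lambda>_. ennreal (abs c))) A"
    using lborel_real_affine[of c z] c by simp
  also have "\<dots> = ennreal c * emeasure lborel ((\<lambda>x. c * x + z) -` A)"
    using A c by (simp add: emeasure_density emeasure_distr nn_integral_cmult_indicator add.commute)
  finally have "emeasure lborel A = ennreal c * emeasure lborel ((\<lambda>x. c * x + z) -` A)" .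
  then have "ennreal (1/c) * emeasure lborel A = (ennreal (1/c) * ennreal c) * emeasure lborel ((\<lambda>x. c * x + z) -` A)"
    by (simp add: mult.assoc)
  also have "ennreal (1/c) * ennreal c = 1" using c by (simp add: ennreal_mult[symmetric])
  finally show ?thesis by simp
qed

lemma pre_aff1_sets: "A \<in> sets borel \<Longrightarrow> (\<lambda>x::real. c * x + z) -` A \<in> sets borel"
  using measurable_sets[of "\<lambda>x::real. c * x + z" borel borel A] by simp

lemma aff_measurable[measurable]: "aff n c z \<in> MM n \<rightarrow>\<^sub>M MM n"
  unfolding aff_def by measurable

lemma distr_aff:
  assumes c: "c > 0"
  shows "scale_measure (ennreal (c^n)) (distr (MM n) (MM n) (aff n c z)) = MM n"
proof (rule PSF.PiM_eqI)
  fix A :: "nat \<Rightarrow> real set" assume A: "\<And>i. i \<in> {..<n} \<Longrightarrow> A i \<in> sets lborel"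
  have pre: "aff n c z -` PiE {..<n} A \<inter> space (MM n) = PiE {..<n} (\<lambda>i. (\<lambda>x. c * x + z i) -` A i)"
    by (auto simp: aff_def space_PiM PiE_iff)
  have "emeasure (scale_measure (ennreal (c^n)) (distr (MM n) (MM n) (aff n c z))) (PiE {..<n} A)
      = ennreal (c^n) * emeasure (MM n) (PiE {..<n} (\<lambda>i. (\<lambda>x. c * x + z i) -` A i))"
    using A by (simp add: emeasure_distr pre[symmetric] sets_PiM_I_finite)
  also have "\<dots> = ennreal (c^n) * (\<Prod>i<n. ennreal (1/c) * emeasure lborel (A i))"
    using A c by (subst PSF.emeasure_PiM) (auto simp: lborel_aff1 pre_aff1_sets)
  also have "\<dots> = (ennreal (c^n) * ennreal (1/c)^n) * (\<Prod>i<n. emeasure lborel (A i))"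
    by (simp add: prod.distrib mult.assoc)
  also have "ennreal (c^n) * ennreal (1/c)^n = 1"
    using c by (simp add: ennreal_power[symmetric] ennreal_mult[symmetric] power_mult_distrib[symmetric])
  finally show "emeasure (scale_measure (ennreal (c^n)) (distr (MM n) (MM n) (aff n c z))) (PiE {..<n} A) = (\<Prod>i<n. emeasure lborel (A i))"
    by simp
qed simp_all

lemma emeasure_aff:
  assumes c: "c > 0" and S: "S \<in> sets (MM n)"
  shows "emeasure (MM n) (aff n c z -` S \<inter> space (MM n)) = ennreal ((1/c)^n) * emeasure (MM n) S"
proof -
  have "emeasure (MM n) S = ennreal (c^n) * emeasure (MM n) (aff n c z -` S \<inter> space (MM n))"
    using arg_cong[OF distr_aff[OF c, of n z], of "\<lambda>M. emeasure M S"] S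
    by (simp add: emeasure_distr)
  then have "ennreal ((1/c)^n) * emeasure (MM n) S = (ennreal ((1/c)^n) * ennreal (c^n)) * emeasure (MM n) (aff n c z -` S \<inter> space (MM n))"
    by (simp add: mult.assoc)
  also have "ennreal ((1/c)^n) * ennreal (c^n) = 1"
    using c by (simp add: ennreal_mult[symmetric] power_mult_distrib[symmetric])
  finally show ?thesis by simp
qed

definition cube :: "nat \<Rightarrow> (nat \<Rightarrow> real) \<Rightarrow> real \<Rightarrow> (nat \<Rightarrow> real) set" where
  "cube n x e = {y \<in> Rn n. \<forall>i<n. \<bar>y i - x i\<bar> < e}"

definition intr :: "nat \<Rightarrow> (nat \<Rightarrow> real) set \<Rightarrow> (nat \<Rightarrow> real) set" where
  "intr n S = {x \<in> Rn n. \<exists>e>0. cube n x e \<subseteq> S}"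

definition clo :: "nat \<Rightarrow> (nat \<Rightarrow> real) set \<Rightarrow> (nat \<Rightarrow> real) set" where
  "clo n S = {x \<in> Rn n. \<forall>e>0. \<exists>k\<in>S. \<forall>i<n. \<bar>k i - x i\<bar> < e}"

lemma space_MM: "space (MM n) = Rn n"
  by (simp add: space_PiM Rn_def)

lemma cube_eq: "cube n q r = PiE {..<n} (\<lambda>i. {q i - r <..< q i + r})"
proof (intro equalityI subsetI)
  fix y assume y: "y \<in> cube n q r"
  then have "y \<in> extensional {..<n}" "\<forall>i<n. \<bar>y i - q i\<bar> < r"
    unfolding cube_def Rn_def by (auto simp: PiE_def)
  then show "y \<in> PiE {..<n} (\<lambda>i. {q i - r <..< q i + r})"
    unfolding PiE_def by (auto simp: Pi_iff abs_less_iff)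
next
  fix y assume y: "y \<in> PiE {..<n} (\<lambda>i. {q i - r <..< q i + r})"
  then have "y \<in> extensional {..<n}" "\<forall>i<n. q i - r < y i \<and> y i < q i + r"
    unfolding PiE_def by (auto simp: Pi_iff)
  then show "y \<in> cube n q r"
    unfolding cube_def Rn_def PiE_def by (auto simp: abs_less_iff)
qed

lemma cube_sets: "cube n q r \<in> sets (MM n)"
  unfolding cube_eq by (rule sets_PiM_I_finite) auto

lemma cube_open:
  assumes y: "y \<in> cube n q r" shows "\<exists>e>0. cube n y e \<subseteq> cube n q r"
proof -
  define e where "e = Min (insert 1 ((\<lambda>i. r - \<bar>y i - q i\<bar>) ` {..<n}))"
  have "e > 0" using y unfolding e_def cube_def by (subst Min_gr_iff) auto
  moreover have "cube n y e \<subseteq> cube n q r"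
  proof
    fix w assume w: "w \<in> cube n y e"
    have "\<forall>i<n. \<bar>w i - q i\<bar> < r"
    proof (intro allI impI)
      fix i assume i: "i < n"
      have "e \<le> r - \<bar>y i - q i\<bar>" unfolding e_def using i by (intro Min_le) auto
      then show "\<bar>w i - q i\<bar> < r" using w i unfolding cube_def by auto
    qed
    then show "w \<in> cube n q r" using w unfolding cube_def by auto
  qed
  ultimately show ?thesis by blast
qed

lemma intr_sub: "intr n S \<subseteq> Rn n" by (auto simp: intr_def)
lemma clo_sub: "clo n S \<subseteq> Rn n" by (auto simp: clo_def)

lemma intr_eq_Union:
  "intr n S = \<Union> ((\<lambda>(q,r). cube n q r) ` {(q,r). q \<in> PiE {..<n} (\<lambda>_. \<rat>) \<and> r \<in> \<rat> \<and> cube n q r \<subseteq> S})"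
proof (intro equalityI subsetI)
  fix x assume x: "x \<in> intr n S"
  then obtain e where e: "e > 0" "cube n x e \<subseteq> S" and xR: "x \<in> Rn n" by (auto simp: intr_def)
  obtain r where r: "r \<in> \<rat>" "0 < r" "r < e/2" using Rats_dense_in_real[of 0 "e/2"] e by auto
  have "\<forall>i. \<exists>q\<in>\<rat>. x i < q \<and> q < x i + r" using Rats_dense_in_real[of "x i" "x i + r" for i] r by auto
  then obtain qf where qf: "\<And>i. qf i \<in> \<rat> \<and> x i < qf i \<and> qf i < x i + r" by metis
  define q where "q = restrict qf {..<n}"
  have q: "q \<in> PiE {..<n} (\<lambda>_. \<rat>)" using qf by (auto simp: q_def)
  have sub: "cube n q r \<subseteq> S"
  proof
    fix y assume "y \<in> cube n q r"
    then have y: "y \<in> Rn n" "\<And>i. i < n \<Longrightarrow> \<bar>y i - qf i\<bar> < r" unfolding cube_def q_def by auto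
    have "\<And>i. i < n \<Longrightarrow> \<bar>y i - x i\<bar> < e"
    proof -
      fix i assume "i < n"
      from y(2)[OF this] qf[of i] r show "\<bar>y i - x i\<bar> < e" by (auto simp: abs_less_iff)
    qed
    then have "y \<in> cube n x e" using y unfolding cube_def by auto
    then show "y \<in> S" using e by auto
  qed
  have "\<And>i. i < n \<Longrightarrow> \<bar>x i - q i\<bar> < r"
  proof -
    fix i assume "i < n"
    then show "\<bar>x i - q i\<bar> < r" using qf[of i] by (auto simp: q_def)
  qed
  then have "x \<in> cube n q r" using xR unfolding cube_def by auto
  then show "x \<in> \<Union> ((\<lambda>(q,r). cube n q r) ` {(q,r). q \<in> PiE {..<n} (\<lambda>_. \<rat>) \<and> r \<in> \<rat> \<and> cube n q r \<subseteq> S})"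
    using q r sub by blast
next
  fix x assume "x \<in> \<Union> ((\<lambda>(q,r). cube n q r) ` {(q,r). q \<in> PiE {..<n} (\<lambda>_. \<rat>) \<and> r \<in> \<rat> \<and> cube n q r \<subseteq> S})"
  then obtain q r where qr: "x \<in> cube n q r" "cube n q r \<subseteq> S" by auto
  then obtain e where "e > 0" "cube n x e \<subseteq> cube n q r" using cube_open by blast
  moreover have "x \<in> Rn n" using qr by (auto simp: cube_def)
  ultimately show "x \<in> intr n S" using qr unfolding intr_def by blast
qed

lemma intr_sets: "intr n S \<in> sets (MM n)"
proof -
  define X where "X = {(q,r). q \<in> PiE {..<n} (\<lambda>_. \<rat>) \<and> r \<in> \<rat> \<and> cube n q r \<subseteq> S}"
  have c: "countable (PiE {..<n} (\<lambda>_. \<rat>) \<times> \<rat>)"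
    by (intro countable_SIGMA countable_PiE countable_rat) auto
  have "countable X"
    by (rule countable_subset[OF _ c]) (unfold X_def, blast)
  then have c2: "countable ((\<lambda>(q,r). cube n q r) ` X)" by (rule countable_image)
  have s2: "(\<lambda>(q,r). cube n q r) ` X \<subseteq> sets (MM n)" by (intro image_subsetI) (simp add: case_prod_beta cube_sets)
  have "\<Union> ((\<lambda>(q,r). cube n q r) ` X) \<in> sets (MM n)" by (rule sets.countable_Union[OF c2 s2])
  then show ?thesis unfolding intr_eq_Union X_def .
qed

lemma clo_eq:
  assumes S: "S \<subseteq> Rn n" shows "clo n S = Rn n - intr n (Rn n - S)"
proof (intro equalityI subsetI)
  fix x assume x: "x \<in> clo n S"
  show "x \<in> Rn n - intr n (Rn n - S)"
  proof (rule ccontr)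
    assume "x \<notin> Rn n - intr n (Rn n - S)"
    then obtain e where e: "e > 0" "cube n x e \<subseteq> Rn n - S" using x by (auto simp: intr_def clo_def)
    obtain k where k: "k \<in> S" "\<forall>i<n. \<bar>k i - x i\<bar> < e" using x e by (auto simp: clo_def)
    have "k \<in> cube n x e" using k S by (auto simp: cube_def)
    then show False using e k by auto
  qed
next
  fix x assume x: "x \<in> Rn n - intr n (Rn n - S)"
  show "x \<in> clo n S" unfolding clo_def
  proof (safe)
    show "x \<in> Rn n" using x by auto
    fix e :: real assume e: "e > 0"
    have "\<not> cube n x e \<subseteq> Rn n - S" using x e by (auto simp: intr_def)
    then obtain k where "k \<in> cube n x e" "k \<in> S" by (auto simp: cube_def)
    then show "\<exists>k\<in>S. \<forall>i<n. \<bar>k i - x i\<bar> < e" by (auto simp: cube_def)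
  qed
qed

lemma clo_sets: "S \<subseteq> Rn n \<Longrightarrow> clo n S \<in> sets (MM n)"
  using intr_sets[of n "Rn n - S"] clo_eq[of S n] sets.compl_sets[of "intr n (Rn n - S)" "MM n"]
  by (simp add: space_MM)

definition cvx :: "nat \<Rightarrow> (nat \<Rightarrow> real) set \<Rightarrow> bool" where
  "cvx n K \<longleftrightarrow> (\<forall>x\<in>K. \<forall>y\<in>K. \<forall>t::real. 0 \<le> t \<and> t \<le> 1 \<longrightarrow>
         restrict (\<lambda>i. (1 - t) * x i + t * y i) {..<n} \<in> K)"

lemma cb_props:
  assumes "convex_body_n n K"
  shows "K \<subseteq> Rn n" "cvx n K" "\<exists>R. \<forall>x\<in>K. \<forall>i<n. \<bar>x i\<bar> \<le> R"
    "\<exists>x0\<in>K. \<exists>e>0. cube n x0 e \<subseteq> K"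
proof -
  show "K \<subseteq> Rn n" using assms unfolding convex_body_n_def by blast
  show "cvx n K" using assms unfolding convex_body_n_def cvx_def by blast
  show "\<exists>R. \<forall>x\<in>K. \<forall>i<n. \<bar>x i\<bar> \<le> R" using assms unfolding convex_body_n_def by blast
  obtain x0 e where "x0 \<in> K" "e > 0" "\<forall>y\<in>Rn n. (\<forall>i<n. \<bar>y i - x0 i\<bar> < e) \<longrightarrow> y \<in> K"
    using assms unfolding convex_body_n_def by blast
  then show "\<exists>x0\<in>K. \<exists>e>0. cube n x0 e \<subseteq> K" unfolding cube_def by blast
qed

lemma real_step:
  fixes y p x k x0 t e :: real
  assumes t: "0 < t" "t < 1" and e: "e > 0" and p: "p = x0 + t * (x - x0)"
    and y: "\<bar>y - p\<bar> < (1 - t) * e / 2" and k: "\<bar>k - x\<bar> < (1 - t) * e / (2 * t)"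
  shows "\<bar>(y - t * k) / (1 - t) - x0\<bar> < e"
proof -
  have t0: "1 - t \<noteq> 0" using t by simp
  have eq: "(y - t * k) / (1 - t) - x0 = ((y - p) + t * (x - k)) / (1 - t)"
    using t0 p by (simp add: divide_simps) (simp add: algebra_simps)
  have "\<bar>t * (x - k)\<bar> < (1 - t) * e / 2"
  proof -
    have "\<bar>t * (x - k)\<bar> = t * \<bar>k - x\<bar>" using t by (simp add: abs_mult abs_minus_commute)
    also have "\<dots> < t * ((1 - t) * e / (2 * t))" using t k by (intro mult_strict_left_mono) auto
    also have "\<dots> = (1 - t) * e / 2" using t by (simp add: field_simps)
    finally show ?thesis .
  qed
  then have "\<bar>(y - p) + t * (x - k)\<bar> < (1 - t) * e"
    using y abs_triangle_ineq[of "y - p" "t * (x - k)"] by linarith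
  then have 1: "\<bar>(y - p) + t * (x - k)\<bar> / (1 - t) < e" using t by (simp add: field_simps)
  have "\<bar>((y - p) + t * (x - k)) / (1 - t)\<bar> = \<bar>(y - p) + t * (x - k)\<bar> / (1 - t)"
    using t by (simp add: abs_divide)
  moreover have "\<bar>1 - t\<bar> = 1 - t" using t by simp
  ultimately show ?thesis unfolding eq using 1 by (simp add: abs_divide)
qed

lemma scale_in_intr:
  assumes KR: "K \<subseteq> Rn n" and cv: "cvx n K" and e: "e > 0" and cb: "cube n x0 e \<subseteq> K"
    and t: "0 < t" "t < 1" and x: "x \<in> clo n K"
  shows "restrict (\<lambda>i. x0 i + t * (x i - x0 i)) {..<n} \<in> intr n K"
proof -
  define p where "p = restrict (\<lambda>i. x0 i + t * (x i - x0 i)) {..<n}"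
  have pR: "p \<in> Rn n" by (simp add: p_def Rn_def)
  have "cube n p ((1 - t) * e / 2) \<subseteq> K"
  proof
    fix y assume y: "y \<in> cube n p ((1 - t) * e / 2)"
    have d: "(1 - t) * e / (2 * t) > 0" using t e by simp
    obtain k where k: "k \<in> K" "\<forall>i<n. \<bar>k i - x i\<bar> < (1 - t) * e / (2 * t)"
      using x d unfolding clo_def by blast
    define w where "w = restrict (\<lambda>i. (y i - t * k i) / (1 - t)) {..<n}"
    have "w \<in> cube n x0 e"
      unfolding cube_def
    proof (safe)
      show "w \<in> Rn n" by (simp add: w_def Rn_def)
      fix i assume i: "i < n"
      have "\<bar>y i - p i\<bar> < (1 - t) * e / 2" using y i by (auto simp: cube_def)
      then have "\<bar>(y i - t * k i) / (1 - t) - x0 i\<bar> < e"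
        using real_step[OF t e, of "p i" "x0 i" "x i" "y i" "k i"] k i by (simp add: p_def)
      then show "\<bar>w i - x0 i\<bar> < e" using i by (simp add: w_def)
    qed
    then have wK: "w \<in> K" using cb by auto
    have "restrict (\<lambda>i. (1 - t) * w i + t * k i) {..<n} \<in> K"
    proof -
      have "0 \<le> t" "t \<le> 1" using t by auto
      then show ?thesis using cv[unfolded cvx_def] wK k(1) by blast
    qed
    moreover have "restrict (\<lambda>i. (1 - t) * w i + t * k i) {..<n} = y"
    proof
      fix i
      have yR: "y \<in> extensional {..<n}" using y by (simp add: cube_def Rn_def PiE_def)
      show "restrict (\<lambda>i. (1 - t) * w i + t * k i) {..<n} i = y i"
      proof (cases "i < n")
        case True
        then have "(1 - t) * w i + t * k i = y i" using t by (simp add: w_def field_simps)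
        then show ?thesis using True by simp
      next
        case False
        then show ?thesis using yR by (simp add: extensional_def)
      qed
    qed
    ultimately show "y \<in> K" by simp
  qed
  moreover have "(1 - t) * e / 2 > 0" using t e by simp
  ultimately show ?thesis using pR unfolding intr_def p_def by blast
qed

lemma intr_subset: "intr n K \<subseteq> K"
proof
  fix x assume "x \<in> intr n K"
  then obtain e where e: "e > 0" "cube n x e \<subseteq> K" and x: "x \<in> Rn n" by (auto simp: intr_def)
  have "x \<in> cube n x e" using x e by (simp add: cube_def)
  then show "x \<in> K" using e by blast
qed

lemma subset_clo: "K \<subseteq> Rn n \<Longrightarrow> K \<subseteq> clo n K"
  unfolding clo_def by force

lemma clo_box:
  assumes R: "\<forall>x\<in>K. \<forall>i<n. \<bar>x i\<bar> \<le> R"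
  shows "clo n K \<subseteq> PiE {..<n} (\<lambda>_. {-(\<bar>R\<bar>+1)..\<bar>R\<bar>+1})"
proof
  fix x assume x: "x \<in> clo n K"
  have "\<forall>i<n. \<bar>x i\<bar> \<le> \<bar>R\<bar> + 1"
  proof (intro allI impI)
    fix i assume i: "i < n"
    have "\<exists>k\<in>K. \<forall>i<n. \<bar>k i - x i\<bar> < 1" using x unfolding clo_def by simp
    then obtain k where k: "k \<in> K" "\<forall>i<n. \<bar>k i - x i\<bar> < 1" by blast
    have "\<bar>k i\<bar> \<le> R" using R k i by blast
    moreover have "\<bar>k i - x i\<bar> < 1" using k(2) i by blast
    ultimately show "\<bar>x i\<bar> \<le> \<bar>R\<bar> + 1" by (smt (verit))
  qed
  moreover have "x \<in> extensional {..<n}" using x by (simp add: clo_def Rn_def PiE_def)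
  ultimately show "x \<in> PiE {..<n} (\<lambda>_. {-(\<bar>R\<bar>+1)..\<bar>R\<bar>+1})"
    unfolding PiE_def by (auto simp: Pi_iff abs_le_iff)
qed

lemma clo_finite:
  assumes KR: "K \<subseteq> Rn n" and R: "\<forall>x\<in>K. \<forall>i<n. \<bar>x i\<bar> \<le> R"
  shows "emeasure (MM n) (clo n K) < \<infinity>"
proof -
  have "emeasure (MM n) (clo n K) \<le> emeasure (MM n) (PiE {..<n} (\<lambda>_. {-(\<bar>R\<bar>+1)..\<bar>R\<bar>+1}))"
    by (rule emeasure_mono[OF clo_box[OF R]]) (rule sets_PiM_I_finite, auto)
  also have "\<dots> = (\<Prod>i<n. emeasure lborel {-(\<bar>R\<bar>+1)..\<bar>R\<bar>+1::real})"
    by (subst PSF.emeasure_PiM) auto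
  also have "\<dots> < \<infinity>"
  proof -
    have h: "emeasure lborel {-(\<bar>R\<bar>+1)..\<bar>R\<bar>+1::real} \<noteq> \<infinity>" by simp
    have "(\<Prod>i<n. emeasure lborel {-(\<bar>R\<bar>+1)..\<bar>R\<bar>+1::real}) \<noteq> \<infinity>"
      using h by (simp add: power_eq_top_ennreal del: emeasure_lborel_Icc)
    then show ?thesis by (simp only: infinity_ennreal_def less_top)
  qed
  finally show ?thesis .
qed

lemma cvx_meas:
  assumes KR: "K \<subseteq> Rn n" and cv: "cvx n K" and R: "\<forall>x\<in>K. \<forall>i<n. \<bar>x i\<bar> \<le> R"
    and e: "e > 0" and x0: "x0 \<in> K" and cb: "cube n x0 e \<subseteq> K"
  shows "clo n K - intr n K \<in> null_sets (MM n)"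
    "K \<in> sets (completion (MM n))"
    "measure (completion (MM n)) K = measure (MM n) (intr n K)"
    "measure (MM n) (clo n K) = measure (MM n) (intr n K)"
proof -
  let ?M = "MM n"
  have fin: "emeasure ?M (clo n K) < \<infinity>" by (rule clo_finite[OF KR R])
  have cs: "clo n K \<in> sets ?M" by (rule clo_sets[OF KR])
  have isK: "intr n K \<in> sets ?M" by (rule intr_sets)
  have ic: "intr n K \<subseteq> clo n K" using intr_subset subset_clo[OF KR] by blast
  have x0R: "x0 \<in> Rn n" using x0 KR by blast
  define mc where "mc = measure ?M (clo n K)"
  define m0 where "m0 = measure ?M (clo n K - intr n K)"
  have bound: "m0 \<le> (1 - t ^ n) * mc" if t: "0 < t" "t < 1" for t
  proof -
    define w where "w = restrict (\<lambda>i. x0 i - x0 i / t) {..<n}"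
    define T where "T = aff n (1/t) w -` clo n K \<inter> space ?M"
    have Ts: "T \<in> sets ?M" unfolding T_def by (rule measurable_sets[OF aff_measurable cs])
    have TI: "T \<subseteq> intr n K"
    proof
      fix y assume y: "y \<in> T"
      then have yR: "y \<in> Rn n" and xc: "aff n (1/t) w y \<in> clo n K" by (auto simp: T_def space_MM)
      have "restrict (\<lambda>i. x0 i + t * (aff n (1/t) w y i - x0 i)) {..<n} \<in> intr n K"
        by (rule scale_in_intr[OF KR cv e cb t xc])
      moreover have "restrict (\<lambda>i. x0 i + t * (aff n (1/t) w y i - x0 i)) {..<n} = y"
      proof
        fix i
        have yE: "y \<in> extensional {..<n}" using yR by (simp add: Rn_def PiE_def)
        show "restrict (\<lambda>i. x0 i + t * (aff n (1/t) w y i - x0 i)) {..<n} i = y i"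
        proof (cases "i < n")
          case True
          then show ?thesis using t by (simp add: aff_def w_def algebra_simps)
        next
          case False
          then show ?thesis using yE by (simp add: extensional_def)
        qed
      qed
      ultimately show "y \<in> intr n K" by simp
    qed
    have eT: "emeasure ?M T = ennreal (t ^ n) * emeasure ?M (clo n K)"
      unfolding T_def using emeasure_aff[of "1/t" "clo n K" n w] t cs by simp
    have mT: "measure ?M T = t ^ n * mc"
      unfolding measure_def mc_def eT using t by (simp add: enn2real_mult)
    have "emeasure ?M (clo n K - T) \<le> emeasure ?M (clo n K)"
      by (rule emeasure_mono) (use cs in auto)
    then have finD: "emeasure ?M (clo n K - T) < \<infinity>" using fin by (simp add: le_less_trans)
    have "m0 \<le> measure ?M (clo n K - T)"
      unfolding m0_def
      by (rule measure_mono_fmeasurable) (use TI cs isK Ts finD in \<open>auto intro!: fmeasurableI\<close>)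
    also have "\<dots> = mc - t ^ n * mc"
      using measure_Diff[of ?M "clo n K" T] fin cs Ts TI ic mT mc_def by auto
    finally show ?thesis by (simp add: algebra_simps)
  qed
  have lim: "((\<lambda>t::real. (1 - t ^ n) * mc) \<longlongrightarrow> (1 - 1 ^ n) * mc) (at_left 1)"
    by (intro tendsto_intros)
  have ev: "\<forall>\<^sub>F t in at_left (1::real). m0 \<le> (1 - t ^ n) * mc"
    using eventually_at_left_real[of 0 "1::real"] by (rule eventually_mono) (auto intro: bound)
  have "m0 \<le> (1 - 1 ^ n) * mc"
    by (rule tendsto_lowerbound[OF lim ev]) simp
  then have m00: "m0 = 0" using measure_nonneg[of ?M "clo n K - intr n K"] unfolding m0_def by simp
  have "emeasure ?M (clo n K - intr n K) \<le> emeasure ?M (clo n K)"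
    by (rule emeasure_mono) (use cs in auto)
  then have "emeasure ?M (clo n K - intr n K) = ennreal m0"
    unfolding m0_def using fin by (intro emeasure_eq_ennreal_measure) auto
  then show null: "clo n K - intr n K \<in> null_sets ?M"
    using m00 cs isK by (auto simp: null_sets_def)
  have KC: "K \<in> sets (completion ?M)"
    by (rule sets_completionI[of K "intr n K" "K - intr n K" "clo n K - intr n K"])
       (use intr_subset subset_clo[OF KR] null isK in auto)
  then show "K \<in> sets (completion ?M)" .
  have mci: "measure ?M (clo n K) = measure ?M (intr n K)"
    using measure_Diff[of ?M "clo n K" "intr n K"] fin cs isK ic m00 unfolding m0_def by auto
  then show "measure ?M (clo n K) = measure ?M (intr n K)" .
  have cf: "clo n K \<in> fmeasurable (completion ?M)"
    using fin cs by (intro fmeasurableI) auto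
  have le1: "measure (completion ?M) K \<le> measure (completion ?M) (clo n K)"
    by (rule measure_mono_fmeasurable[OF subset_clo[OF KR] KC cf])
  have csC: "clo n K \<in> sets (completion ?M)" using cs by simp
  have "emeasure (completion ?M) K \<le> emeasure (completion ?M) (clo n K)"
    by (rule emeasure_mono[OF subset_clo[OF KR] csC])
  also have "\<dots> = emeasure ?M (clo n K)"
    using emeasure_completion[OF csC] main_part[OF cs] by simp
  finally have "emeasure (completion ?M) K < \<infinity>" using fin by (simp add: le_less_trans)
  then have KF: "K \<in> fmeasurable (completion ?M)" using KC by (intro fmeasurableI)
  moreover have "measure (completion ?M) (intr n K) \<le> measure (completion ?M) K"
    by (rule measure_mono_fmeasurable[OF intr_subset _ KF]) (use isK in simp)
  ultimately show "measure (completion ?M) K = measure ?M (intr n K)"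
    using le1 mci cs isK by simp
qed

lemma cbI:
  assumes "K \<subseteq> Rn n" "cvx n K" "\<forall>x\<in>K. \<forall>i<n. \<bar>x i\<bar> \<le> R" "x0 \<in> K" "e > 0" "cube n x0 e \<subseteq> K"
  shows "convex_body_n n K"
  using assms unfolding convex_body_n_def cvx_def cube_def by blast

lemma restrict_eqI:
  assumes "y \<in> Rn n" "\<And>i. i < n \<Longrightarrow> f i = y i"
  shows "restrict f {..<n} = y"
proof
  fix i
  have yE: "y \<in> extensional {..<n}" using assms(1) by (simp add: Rn_def PiE_def)
  show "restrict f {..<n} i = y i"
  proof (cases "i < n")
    case True then show ?thesis using assms(2) by simp
  next
    case False then show ?thesis using yE by (simp add: extensional_def)
  qed
qed

lemma restrict_Rn[simp]: "restrict f {..<n} \<in> Rn n"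
  by (simp add: Rn_def)

lemma cb_sum:
  assumes A: "convex_body_n n A" and B: "convex_body_n n B"
  shows "convex_body_n n (mink_sum n A B)"
proof -
  note a = cb_props[OF A] and b = cb_props[OF B]
  obtain Ra where Ra: "\<forall>x\<in>A. \<forall>i<n. \<bar>x i\<bar> \<le> Ra" using a(3) by blast
  obtain Rb where Rb: "\<forall>x\<in>B. \<forall>i<n. \<bar>x i\<bar> \<le> Rb" using b(3) by blast
  obtain xa ea where xa: "xa \<in> A" "ea > 0" "cube n xa ea \<subseteq> A" using a(4) by blast
  obtain xb eb where xb: "xb \<in> B" "eb > 0" "cube n xb eb \<subseteq> B" using b(4) by blast
  let ?S = "mink_sum n A B"
  have sub: "?S \<subseteq> Rn n" unfolding mink_sum_def by auto
  have cv: "cvx n ?S" unfolding cvx_def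
  proof (intro ballI allI impI)
    fix x y and t :: real assume x: "x \<in> ?S" and y: "y \<in> ?S" and t: "0 \<le> t \<and> t \<le> 1"
    obtain a1 b1 where 1: "x = restrict (\<lambda>i. a1 i + b1 i) {..<n}" "a1 \<in> A" "b1 \<in> B"
      using x unfolding mink_sum_def by blast
    obtain a2 b2 where 2: "y = restrict (\<lambda>i. a2 i + b2 i) {..<n}" "a2 \<in> A" "b2 \<in> B"
      using y unfolding mink_sum_def by blast
    define a where "a = restrict (\<lambda>i. (1 - t) * a1 i + t * a2 i) {..<n}"
    define b where "b = restrict (\<lambda>i. (1 - t) * b1 i + t * b2 i) {..<n}"
    have "a \<in> A" using a(2) 1 2 t unfolding cvx_def a_def by blast
    moreover have "b \<in> B" using b(2) 1 2 t unfolding cvx_def b_def by blast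
    moreover have "restrict (\<lambda>i. (1 - t) * x i + t * y i) {..<n} = restrict (\<lambda>i. a i + b i) {..<n}"
      by (rule restrict_eqI) (auto simp: 1 2 a_def b_def algebra_simps)
    ultimately show "restrict (\<lambda>i. (1 - t) * x i + t * y i) {..<n} \<in> ?S"
      unfolding mink_sum_def by blast
  qed
  have bd: "\<forall>x\<in>?S. \<forall>i<n. \<bar>x i\<bar> \<le> Ra + Rb"
  proof (intro ballI allI impI)
    fix x i assume x: "x \<in> ?S" and i: "i < n"
    obtain a1 b1 where 1: "x = restrict (\<lambda>i. a1 i + b1 i) {..<n}" "a1 \<in> A" "b1 \<in> B"
      using x unfolding mink_sum_def by blast
    have "\<bar>a1 i\<bar> \<le> Ra" "\<bar>b1 i\<bar> \<le> Rb" using Ra Rb 1 i by auto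
    then show "\<bar>x i\<bar> \<le> Ra + Rb" using i 1(1) by simp
  qed
  define p where "p = restrict (\<lambda>i. xa i + xb i) {..<n}"
  have cp: "cube n p ea \<subseteq> ?S"
  proof
    fix y assume y: "y \<in> cube n p ea"
    define a where "a = restrict (\<lambda>i. y i - xb i) {..<n}"
    have "a \<in> cube n xa ea" using y unfolding cube_def a_def p_def by (auto simp: algebra_simps)
    then have "a \<in> A" using xa by blast
    moreover have "restrict (\<lambda>i. a i + xb i) {..<n} = y"
      by (rule restrict_eqI) (use y in \<open>auto simp: a_def cube_def\<close>)
    ultimately show "y \<in> ?S" using xb unfolding mink_sum_def by blast
  qed
  have "p \<in> cube n p ea" using xa by (simp add: cube_def p_def)
  then have "p \<in> ?S" using cp by blast
  then show ?thesis by (rule cbI[OF sub cv bd _ xa(2) cp])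
qed

lemma cb_diff:
  assumes A: "convex_body_n n A" and B: "convex_body_n n B"
  shows "convex_body_n n (mink_diff n A B)"
proof -
  note a = cb_props[OF A] and b = cb_props[OF B]
  obtain Ra where Ra: "\<forall>x\<in>A. \<forall>i<n. \<bar>x i\<bar> \<le> Ra" using a(3) by blast
  obtain Rb where Rb: "\<forall>x\<in>B. \<forall>i<n. \<bar>x i\<bar> \<le> Rb" using b(3) by blast
  obtain xa ea where xa: "xa \<in> A" "ea > 0" "cube n xa ea \<subseteq> A" using a(4) by blast
  obtain xb eb where xb: "xb \<in> B" "eb > 0" "cube n xb eb \<subseteq> B" using b(4) by blast
  let ?S = "mink_diff n A B"
  have sub: "?S \<subseteq> Rn n" unfolding mink_diff_def by auto
  have cv: "cvx n ?S" unfolding cvx_def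
  proof (intro ballI allI impI)
    fix x y and t :: real assume x: "x \<in> ?S" and y: "y \<in> ?S" and t: "0 \<le> t \<and> t \<le> 1"
    obtain a1 b1 where 1: "x = restrict (\<lambda>i. a1 i - b1 i) {..<n}" "a1 \<in> A" "b1 \<in> B"
      using x unfolding mink_diff_def by blast
    obtain a2 b2 where 2: "y = restrict (\<lambda>i. a2 i - b2 i) {..<n}" "a2 \<in> A" "b2 \<in> B"
      using y unfolding mink_diff_def by blast
    define a where "a = restrict (\<lambda>i. (1 - t) * a1 i + t * a2 i) {..<n}"
    define b where "b = restrict (\<lambda>i. (1 - t) * b1 i + t * b2 i) {..<n}"
    have "a \<in> A" using a(2) 1 2 t unfolding cvx_def a_def by blast
    moreover have "b \<in> B" using b(2) 1 2 t unfolding cvx_def b_def by blast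
    moreover have "restrict (\<lambda>i. (1 - t) * x i + t * y i) {..<n} = restrict (\<lambda>i. a i - b i) {..<n}"
      by (rule restrict_eqI) (auto simp: 1 2 a_def b_def algebra_simps)
    ultimately show "restrict (\<lambda>i. (1 - t) * x i + t * y i) {..<n} \<in> ?S"
      unfolding mink_diff_def by blast
  qed
  have bd: "\<forall>x\<in>?S. \<forall>i<n. \<bar>x i\<bar> \<le> Ra + Rb"
  proof (intro ballI allI impI)
    fix x i assume x: "x \<in> ?S" and i: "i < n"
    obtain a1 b1 where 1: "x = restrict (\<lambda>i. a1 i - b1 i) {..<n}" "a1 \<in> A" "b1 \<in> B"
      using x unfolding mink_diff_def by blast
    have "\<bar>a1 i\<bar> \<le> Ra" "\<bar>b1 i\<bar> \<le> Rb" using Ra Rb 1 i by auto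
    then show "\<bar>x i\<bar> \<le> Ra + Rb" using i 1(1) by simp
  qed
  define p where "p = restrict (\<lambda>i. xa i - xb i) {..<n}"
  have cp: "cube n p ea \<subseteq> ?S"
  proof
    fix y assume y: "y \<in> cube n p ea"
    define a where "a = restrict (\<lambda>i. y i + xb i) {..<n}"
    have "a \<in> cube n xa ea" using y unfolding cube_def a_def p_def by (auto simp: algebra_simps)
    then have "a \<in> A" using xa by blast
    moreover have "restrict (\<lambda>i. a i - xb i) {..<n} = y"
      by (rule restrict_eqI) (use y in \<open>auto simp: a_def cube_def\<close>)
    ultimately show "y \<in> ?S" using xb unfolding mink_diff_def by blast
  qed
  have "p \<in> cube n p ea" using xa by (simp add: cube_def p_def)
  then have "p \<in> ?S" using cp by blast
  then show ?thesis by (rule cbI[OF sub cv bd _ xa(2) cp])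
qed

definition sub :: "nat \<Rightarrow> (nat \<Rightarrow> real) \<Rightarrow> (nat \<Rightarrow> real) \<Rightarrow> (nat \<Rightarrow> real)" where
  "sub n d u = restrict (\<lambda>i. d i - u i) {..<n}"

lemma sub_aff: "sub n d u = aff n 1 (\<lambda>i. - u i) d"
  by (simp add: sub_def aff_def)

lemma emeasure_shift:
  assumes S: "S \<in> sets (MM n)"
  shows "emeasure (MM n) {d \<in> Rn n. sub n d u \<in> S} = emeasure (MM n) S"
proof -
  have "{d \<in> Rn n. sub n d u \<in> S} = aff n 1 (\<lambda>i. - u i) -` S \<inter> space (MM n)"
    by (auto simp: sub_aff space_MM)
  then show ?thesis using emeasure_aff[OF _ S, of 1 "\<lambda>i. - u i"] by simp
qed

lemma cube_in_intr: "cube n x e \<subseteq> K \<Longrightarrow> cube n x e \<subseteq> intr n K"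
proof
  fix y assume c: "cube n x e \<subseteq> K" and y: "y \<in> cube n x e"
  obtain r where "r > 0" "cube n y r \<subseteq> cube n x e" using cube_open[OF y] by blast
  then have "cube n y r \<subseteq> K" "r > 0" using c by auto
  moreover have "y \<in> Rn n" using y by (simp add: cube_def)
  ultimately show "y \<in> intr n K" unfolding intr_def by blast
qed

lemma emeasure_cube: "e > 0 \<Longrightarrow> emeasure (MM n) (cube n x e) = ennreal ((2 * e) ^ n)"
proof -
  assume e: "e > 0"
  have "emeasure (MM n) (cube n x e) = (\<Prod>i<n. emeasure lborel {x i - e <..< x i + e})"
    unfolding cube_eq by (subst PSF.emeasure_PiM) auto
  also have "\<dots> = (\<Prod>i<n. ennreal (2 * e))"
    using e by (intro prod.cong refl) (simp add: emeasure_lborel_Ioo)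
  also have "\<dots> = ennreal ((2 * e) ^ n)" using e by (simp only: prod_constant card_lessThan ennreal_power)
  finally show ?thesis .
qed

lemma shift_sets: "S \<in> sets (MM n) \<Longrightarrow> {d \<in> Rn n. sub n d u \<in> S} \<in> sets (MM n)"
proof -
  assume S: "S \<in> sets (MM n)"
  have "{d \<in> Rn n. sub n d u \<in> S} = aff n 1 (\<lambda>i. - u i) -` S \<inter> space (MM n)"
    by (auto simp: sub_aff space_MM)
  then show ?thesis using measurable_sets[OF aff_measurable S] by simp
qed

lemma F3:
  assumes cv: "cvx n B" and BR: "B \<subseteq> Rn n" and a: "a \<in> A" and b: "b \<in> B"
    and d: "d = restrict (\<lambda>i. a i + b i) {..<n}" and u: "u \<in> Rn n"
    and ub: "sub n u b \<in> intr n B"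
  shows "aff n (1/2) (\<lambda>_. 0) u \<in> B" "sub n d u \<in> intr n (mink_diff n A B)"
proof -
  define b' where "b' = sub n u b"
  have b'B: "b' \<in> B" using ub intr_subset unfolding b'_def by blast
  have "restrict (\<lambda>i. (1 - 1/2) * b i + 1/2 * b' i) {..<n} \<in> B"
  proof -
    have "(0::real) \<le> 1/2" "(1/2::real) \<le> 1" by auto
    then show ?thesis using cv b b'B unfolding cvx_def by blast
  qed
  moreover have "restrict (\<lambda>i. (1 - 1/2) * b i + 1/2 * b' i) {..<n} = aff n (1/2) (\<lambda>_. 0) u"
    by (rule restrict_eqI) (auto simp: aff_def b'_def sub_def field_simps)
  ultimately show "aff n (1/2) (\<lambda>_. 0) u \<in> B" by simp
  obtain r where r: "r > 0" "cube n b' r \<subseteq> B" using ub unfolding b'_def intr_def by blast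
  have "cube n (sub n d u) r \<subseteq> mink_diff n A B"
  proof
    fix y assume y: "y \<in> cube n (sub n d u) r"
    define b'' where "b'' = restrict (\<lambda>i. a i - y i) {..<n}"
    have "b'' \<in> cube n b' r"
      using y unfolding cube_def b''_def b'_def sub_def d by (auto simp: algebra_simps abs_minus_commute)
    then have "b'' \<in> B" using r by blast
    moreover have "restrict (\<lambda>i. a i - b'' i) {..<n} = y"
      by (rule restrict_eqI) (use y in \<open>auto simp: b''_def cube_def\<close>)
    ultimately show "y \<in> mink_diff n A B" using a unfolding mink_diff_def by blast
  qed
  moreover have "sub n d u \<in> Rn n" by (simp add: sub_def)
  ultimately show "sub n d u \<in> intr n (mink_diff n A B)" using r unfolding intr_def by blast
qed

lemma sub_measurable[measurable]:
  "(\<lambda>x. sub n (snd x) (fst x)) \<in> (MM n \<Otimes>\<^sub>M MM n) \<rightarrow>\<^sub>M MM n"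
  unfolding sub_def by measurable

lemma main_ineq:
  assumes A: "convex_body_n n A" and B: "convex_body_n n B"
  shows "measure (MM n) (intr n (mink_sum n A B)) \<le> 2 ^ n * measure (MM n) (intr n (mink_diff n A B))"
proof -
  let ?M = "MM n"
  interpret fps: finite_product_sigma_finite "\<lambda>_. lborel::real measure" "{..<n}" by standard simp
  interpret P2: pair_sigma_finite ?M ?M ..
  define P where "P = intr n (mink_sum n A B)"
  define D where "D = intr n (mink_diff n A B)"
  define IB where "IB = intr n B"
  define CB where "CB = clo n B"
  define E where "E = aff n (1/2) (\<lambda>_. 0) -` CB \<inter> space ?M"
  note b = cb_props[OF B]
  obtain Rb where Rb: "\<forall>x\<in>B. \<forall>i<n. \<bar>x i\<bar> \<le> Rb" using b(3) by blast
  obtain xb eb where xb: "xb \<in> B" "eb > 0" "cube n xb eb \<subseteq> B" using b(4) by blast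
  note bm = cvx_meas[OF b(1) b(2) Rb xb(2) xb(1) xb(3)]
  have CBs[measurable]: "CB \<in> sets ?M" unfolding CB_def by (rule clo_sets[OF b(1)])
  have IBs[measurable]: "IB \<in> sets ?M" unfolding IB_def by (rule intr_sets)
  have Ps[measurable]: "P \<in> sets ?M" unfolding P_def by (rule intr_sets)
  have Ds[measurable]: "D \<in> sets ?M" unfolding D_def by (rule intr_sets)
  have Es[measurable]: "E \<in> sets ?M" unfolding E_def by (rule measurable_sets[OF aff_measurable CBs])
  have CBfin: "emeasure ?M CB < \<infinity>" unfolding CB_def by (rule clo_finite[OF b(1) Rb])
  note s = cb_props[OF cb_sum[OF A B]] and dd = cb_props[OF cb_diff[OF A B]]
  obtain Rs where Rs: "\<forall>x\<in>mink_sum n A B. \<forall>i<n. \<bar>x i\<bar> \<le> Rs" using s(3) by blast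
  obtain Rd where Rd: "\<forall>x\<in>mink_diff n A B. \<forall>i<n. \<bar>x i\<bar> \<le> Rd" using dd(3) by blast
  have Pfin: "emeasure ?M P < \<infinity>"
  proof -
    have "P \<subseteq> clo n (mink_sum n A B)" unfolding P_def using intr_subset subset_clo[OF s(1)] by blast
    then have "emeasure ?M P \<le> emeasure ?M (clo n (mink_sum n A B))"
      by (rule emeasure_mono) (rule clo_sets[OF s(1)])
    then show ?thesis using clo_finite[OF s(1) Rs] by (simp add: le_less_trans)
  qed
  have Dfin: "emeasure ?M D < \<infinity>"
  proof -
    have "D \<subseteq> clo n (mink_diff n A B)" unfolding D_def using intr_subset subset_clo[OF dd(1)] by blast
    then have "emeasure ?M D \<le> emeasure ?M (clo n (mink_diff n A B))"
      by (rule emeasure_mono) (rule clo_sets[OF dd(1)])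
    then show ?thesis using clo_finite[OF dd(1) Rd] by (simp add: le_less_trans)
  qed
  have IBfin: "emeasure ?M IB < \<infinity>"
  proof -
    have "emeasure ?M IB \<le> emeasure ?M CB"
      by (rule emeasure_mono) (use intr_subset subset_clo[OF b(1)] CBs in \<open>auto simp: IB_def CB_def\<close>)
    then show ?thesis using CBfin by (simp add: le_less_trans)
  qed
  define f where "f u d = indicator E u * indicator P d * (indicator D (sub n d u) :: ennreal)" for u d
  have fm: "case_prod f \<in> borel_measurable (?M \<Otimes>\<^sub>M ?M)"
    unfolding f_def case_prod_beta by measurable
  have low: "indicator P d * emeasure ?M IB \<le> (\<integral>\<^sup>+ u. f u d \<partial>?M)" if d: "d \<in> space ?M" for d
  proof (cases "d \<in> P")
    case False then show ?thesis by simp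
  next
    case True
    then have "d \<in> mink_sum n A B" using intr_subset unfolding P_def by blast
    then obtain a bb where ab: "d = restrict (\<lambda>i. a i + bb i) {..<n}" "a \<in> A" "bb \<in> B"
      unfolding mink_sum_def by blast
    define T where "T = {u \<in> Rn n. sub n u bb \<in> IB}"
    have Ts: "T \<in> sets ?M" unfolding T_def by (rule shift_sets[OF IBs])
    have "emeasure ?M IB = emeasure ?M T" unfolding T_def by (rule emeasure_shift[OF IBs, symmetric])
    also have "\<dots> = (\<integral>\<^sup>+ u. indicator T u \<partial>?M)" using Ts by simp
    also have "\<dots> \<le> (\<integral>\<^sup>+ u. f u d \<partial>?M)"
    proof (rule nn_integral_mono)
      fix u assume u: "u \<in> space ?M"
      show "indicator T u \<le> f u d"
      proof (cases "u \<in> T")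
        case False then show ?thesis by simp
      next
        case True
        then have uR: "u \<in> Rn n" and ub: "sub n u bb \<in> intr n B" by (auto simp: T_def IB_def)
        note f3 = F3[OF b(2) b(1) ab(2) ab(3) ab(1) uR ub]
        have "u \<in> E" using f3(1) subset_clo[OF b(1)] uR by (auto simp: E_def CB_def space_MM)
        moreover have "sub n d u \<in> D" using f3(2) by (simp add: D_def)
        ultimately show ?thesis using \<open>d \<in> P\<close> True by (simp add: f_def)
      qed
    qed
    finally show ?thesis using True by simp
  qed
  have up: "(\<integral>\<^sup>+ d. f u d \<partial>?M) \<le> indicator E u * emeasure ?M D" if u: "u \<in> space ?M" for u
  proof -
    define T where "T = {d \<in> Rn n. sub n d u \<in> D}"
    have Ts: "T \<in> sets ?M" unfolding T_def by (rule shift_sets[OF Ds])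
    have "(\<integral>\<^sup>+ d. f u d \<partial>?M) \<le> (\<integral>\<^sup>+ d. indicator E u * indicator T d \<partial>?M)"
    proof (rule nn_integral_mono)
      fix d assume d: "d \<in> space ?M"
      have "indicator D (sub n d u) = (indicator T d :: ennreal)"
        using d by (simp add: T_def space_MM indicator_def)
      moreover have "indicator P d * (indicator D (sub n d u) :: ennreal) \<le> indicator D (sub n d u)"
        by (simp add: indicator_def)
      ultimately show "f u d \<le> indicator E u * indicator T d"
        unfolding f_def by (simp add: mult.assoc mult_left_mono)
    qed
    also have "\<dots> = indicator E u * emeasure ?M T"
      using Ts by (simp add: nn_integral_cmult)
    also have "emeasure ?M T = emeasure ?M D" unfolding T_def by (rule emeasure_shift[OF Ds])
    finally show ?thesis .
  qed
  have "emeasure ?M P * emeasure ?M IB = (\<integral>\<^sup>+ d. indicator P d * emeasure ?M IB \<partial>?M)"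
    using Ps by (simp add: nn_integral_multc)
  also have "\<dots> \<le> (\<integral>\<^sup>+ d. (\<integral>\<^sup>+ u. f u d \<partial>?M) \<partial>?M)"
    by (rule nn_integral_mono) (rule low)
  also have "\<dots> = (\<integral>\<^sup>+ u. (\<integral>\<^sup>+ d. f u d \<partial>?M) \<partial>?M)"
    by (rule P2.Fubini'[OF fm])
  also have "\<dots> \<le> (\<integral>\<^sup>+ u. indicator E u * emeasure ?M D \<partial>?M)"
    by (rule nn_integral_mono) (rule up)
  also have "\<dots> = emeasure ?M E * emeasure ?M D"
    using Es by (simp add: nn_integral_multc)
  also have "emeasure ?M E = ennreal (2 ^ n) * emeasure ?M CB"
    unfolding E_def using emeasure_aff[of "1/2" CB n "\<lambda>_. 0"] CBs by simp
  finally have ineq: "emeasure ?M P * emeasure ?M IB \<le> ennreal (2 ^ n) * emeasure ?M CB * emeasure ?M D" .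
  define mP where "mP = measure ?M P"
  define mD where "mD = measure ?M D"
  define mI where "mI = measure ?M IB"
  have mCB: "measure ?M CB = mI" unfolding mI_def CB_def IB_def by (rule bm(4))
  have eP: "emeasure ?M P = ennreal mP" unfolding mP_def using Pfin by (intro emeasure_eq_ennreal_measure) auto
  have eD: "emeasure ?M D = ennreal mD" unfolding mD_def using Dfin by (intro emeasure_eq_ennreal_measure) auto
  have eI: "emeasure ?M IB = ennreal mI" unfolding mI_def using IBfin by (intro emeasure_eq_ennreal_measure) auto
  have eC: "emeasure ?M CB = ennreal mI" using CBfin mCB by (intro emeasure_eq_ennreal_measure[THEN trans]) auto
  have nn: "mP \<ge> 0" "mD \<ge> 0" "mI \<ge> 0" by (auto simp: mP_def mD_def mI_def)
  have "ennreal (mP * mI) \<le> ennreal (2 ^ n * mI * mD)"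
    using ineq unfolding eP eD eI eC using nn by (simp add: ennreal_mult[symmetric] mult.assoc)
  then have le: "mP * mI \<le> 2 ^ n * mI * mD" using nn by (simp add: ennreal_le_iff)
  have "ennreal ((2 * eb) ^ n) \<le> emeasure ?M IB"
    unfolding emeasure_cube[OF xb(2), of n xb, symmetric] IB_def
    by (rule emeasure_mono[OF cube_in_intr[OF xb(3)] intr_sets])
  then have "(2 * eb) ^ n \<le> mI" unfolding eI using nn by (simp add: ennreal_le_iff)
  moreover have "(2 * eb) ^ n > 0" using xb(2) by simp
  ultimately have "mI > 0" by linarith
  then have "mP \<le> 2 ^ n * mD" using le by (simp add: mult.commute mult.left_commute)
  then show ?thesis unfolding mP_def mD_def P_def D_def .
qed

theorem mainTheorem4:
  shows "\<exists>C::real. C > 0 \<and>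
    (\<forall>n::nat. \<forall>A B. n \<ge> 1 \<longrightarrow> convex_body_n n A \<longrightarrow> convex_body_n n B \<longrightarrow>
       vol_n n (mink_sum n A B) powr (1 / real n) \<le> C * vol_n n (mink_diff n A B) powr (1 / real n))"
proof (intro exI[of _ 2] conjI allI impI)
  show "(2::real) > 0" by simp
  fix n :: nat and A B
  assume n: "n \<ge> 1" and A: "convex_body_n n A" and B: "convex_body_n n B"
  note s = cb_props[OF cb_sum[OF A B]] and dd = cb_props[OF cb_diff[OF A B]]
  obtain Rs where Rs: "\<forall>x\<in>mink_sum n A B. \<forall>i<n. \<bar>x i\<bar> \<le> Rs" using s(3) by blast
  obtain Rd where Rd: "\<forall>x\<in>mink_diff n A B. \<forall>i<n. \<bar>x i\<bar> \<le> Rd" using dd(3) by blast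
  obtain xs es where xs: "xs \<in> mink_sum n A B" "es > 0" "cube n xs es \<subseteq> mink_sum n A B" using s(4) by blast
  obtain xd ed where xd: "xd \<in> mink_diff n A B" "ed > 0" "cube n xd ed \<subseteq> mink_diff n A B" using dd(4) by blast
  have vs: "vol_n n (mink_sum n A B) = measure (MM n) (intr n (mink_sum n A B))"
    unfolding vol_n_def lebesgue_n_def by (rule cvx_meas(3)[OF s(1) s(2) Rs xs(2) xs(1) xs(3)])
  have vd: "vol_n n (mink_diff n A B) = measure (MM n) (intr n (mink_diff n A B))"
    unfolding vol_n_def lebesgue_n_def by (rule cvx_meas(3)[OF dd(1) dd(2) Rd xd(2) xd(1) xd(3)])
  define x where "x = vol_n n (mink_sum n A B)"
  define y where "y = vol_n n (mink_diff n A B)"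
  have le: "x \<le> 2 ^ n * y" unfolding x_def y_def vs vd by (rule main_ineq[OF A B])
  have nn: "x \<ge> 0" "y \<ge> 0" by (auto simp: x_def y_def vol_n_def)
  have "x powr (1 / real n) \<le> (2 ^ n * y) powr (1 / real n)"
    by (rule powr_mono2) (use le nn in auto)
  also have "\<dots> = (2 ^ n) powr (1 / real n) * y powr (1 / real n)"
    using nn by (simp add: powr_mult)
  also have "(2 ^ n :: real) powr (1 / real n) = 2"
  proof -
    have "(2 ^ n :: real) = 2 powr (real n)" by (simp add: powr_realpow)
    then have "(2 ^ n :: real) powr (1 / real n) = 2 powr (real n * (1 / real n))"
      by (simp add: powr_powr)
    also have "real n * (1 / real n) = 1" using n by simp
    finally show ?thesis by simp
  qed
  finally show "vol_n n (mink_sum n A B) powr (1 / real n) \<le> 2 * vol_n n (mink_diff n A B) powr (1 / real n)"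
    unfolding x_def y_def .
qed

end
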